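(* Let $V$ be a complex vector space with inner products $\langle\cdot,\cdot\rangle_1,\langle\cdot,\cdot\rangle_2$ and induced norms $\|\cdot\|_1,\|\cdot\|_2$. The following are equivalent: (1) there is $c>0$ with $\langle\cdot,\cdot\rangle_2=c\langle\cdot,\cdot\rangle_1$; (2) there is $c>0$ with $\|\cdot\|_2=c\|\cdot\|_1$; (3) for all nonzero $x,y\in V$, the angle between $x$ and $y$ with respect to $\langle\cdot,\cdot\rangle_1$ equals that with respect to $\langle\cdot,\cdot\rangle_2$; (4) for all nonzero $x,y\in V$, the angle between $x,y$ with respect to $\langle\cdot,\cdot\rangle_1$ is $\pi/2$ iff it is $\pi/2$ with respect to $\langle\cdot,\cdot\rangle_2$ (i.e. $\mathrm{Re}\langle x,y\rangle_1=0\iff\mathrm{Re}\langle x,y\rangle_2=0$); (5) for all $x,y\in V$, $\langle x,y\rangle_1=0$ iff $\langle x,y\rangle_2=0$; (6) there exists $\theta_0\in(0,\pi)$ such that for all nonzero $x,y\in V$, the angle between $x$ and $y$ with respect to $\langle\cdot,\cdot\rangle_1$ is $\theta_0$ iff the angle between them with respect to $\langle\cdot,\cdot\rangle_2$ is $\theta_0$.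
   Context: Inner products are linear in the first argument and conjugate-linear in the second, with norm $\|x\|=\sqrt{\langle x,x\rangle}$. The (Euclidean) angle between nonzero vectors $x,y$ of a complex inner product space is the unique $\theta\in[0,\pi]$ with $\cos\theta=\mathrm{Re}\,\langle x,y\rangle/(\|x\|\|y\|)$. *)

theory Defs
  imports Complex_Main
begin

text \<open>A complex vector space is given by an additive group type 'v together with a
  scalar multiplication sc satisfying the axioms of the locale vector_space.\<close>

definition is_inner_product :: "(complex \<Rightarrow> 'v::ab_group_add \<Rightarrow> 'v) \<Rightarrow> ('v \<Rightarrow> 'v \<Rightarrow> complex) \<Rightarrow> bool" where
  "is_inner_product sc ip \<longleftrightarrow>
     (\<forall>x y z. ip (x + y) z = ip x z + ip y z) \<and>
     (\<forall>a x y. ip (sc a x) y = a * ip x y) \<and>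
     (\<forall>x y. ip y x = cnj (ip x y)) \<and>
     (\<forall>x. Im (ip x x) = 0 \<and> Re (ip x x) \<ge> 0) \<and>
     (\<forall>x. ip x x = 0 \<longrightarrow> x = 0)"

definition ip_norm :: "('v \<Rightarrow> 'v \<Rightarrow> complex) \<Rightarrow> 'v \<Rightarrow> real" where
  "ip_norm ip x = sqrt (Re (ip x x))"

definition ip_angle :: "('v \<Rightarrow> 'v \<Rightarrow> complex) \<Rightarrow> 'v \<Rightarrow> 'v \<Rightarrow> real" where
  "ip_angle ip x y = arccos (Re (ip x y) / (ip_norm ip x * ip_norm ip y))"

end

theory Submission
  imports Defs
begin



context
  fixes sc :: "complex \<Rightarrow> 'v::ab_group_add \<Rightarrow> 'v" and ip :: "'v \<Rightarrow> 'v \<Rightarrow> complex"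
  assumes IP: "is_inner_product sc ip"
begin

lemma ip_add_left: "ip (x + y) z = ip x z + ip y z"
  using IP unfolding is_inner_product_def by blast
lemma ip_scale_left: "ip (sc a x) y = a * ip x y"
  using IP unfolding is_inner_product_def by blast
lemma ip_cnj: "ip y x = cnj (ip x y)"
  using IP unfolding is_inner_product_def by blast
lemma ip_self_im: "Im (ip x x) = 0"
  using IP unfolding is_inner_product_def by blast
lemma ip_self_re: "Re (ip x x) \<ge> 0"
  using IP unfolding is_inner_product_def by blast
lemma ip_def0: "ip x x = 0 \<Longrightarrow> x = 0"
  using IP unfolding is_inner_product_def by blast

lemma ip_zero_left[simp]: "ip 0 y = 0"
  using ip_add_left[of 0 0 y] by simp
lemma ip_zero_right[simp]: "ip y 0 = 0"
  using ip_cnj[of 0 y] by simp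
lemma ip_minus_left: "ip (- x) y = - ip x y"
  using ip_add_left[of x "-x" y] by (simp add: add_eq_0_iff)
lemma ip_diff_left: "ip (x - y) z = ip x z - ip y z"
  using ip_add_left[of x "-y" z] ip_minus_left[of y z] by simp
lemma ip_add_right: "ip x (y + z) = ip x y + ip x z"
proof -
  have "ip x (y + z) = cnj (ip (y + z) x)" by (rule ip_cnj)
  also have "\<dots> = cnj (ip y x) + cnj (ip z x)" by (simp add: ip_add_left)
  also have "\<dots> = ip x y + ip x z" by (simp only: ip_cnj[of x y, symmetric] ip_cnj[of x z, symmetric])
  finally show ?thesis .
qed
lemma ip_scale_right: "ip x (sc a y) = cnj a * ip x y"
proof -
  have "ip x (sc a y) = cnj (ip (sc a y) x)" by (rule ip_cnj)
  also have "\<dots> = cnj a * cnj (ip y x)" by (simp add: ip_scale_left)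
  also have "\<dots> = cnj a * ip x y" by (simp only: ip_cnj[of x y, symmetric])
  finally show ?thesis .
qed
lemma ip_minus_right: "ip x (- y) = - ip x y"
proof -
  have "ip x (- y) = cnj (ip (- y) x)" by (rule ip_cnj)
  also have "\<dots> = - cnj (ip y x)" by (simp add: ip_minus_left)
  also have "\<dots> = - ip x y" by (simp only: ip_cnj[of x y, symmetric])
  finally show ?thesis .
qed
lemma re_sym: "Re (ip y x) = Re (ip x y)"
  using ip_cnj[of x y] by simp
lemma ip_self_real: "ip x x = complex_of_real (Re (ip x x))"
  using ip_self_im[of x] by (simp add: complex_eq_iff)
lemma ip_self_pos: "x \<noteq> 0 \<Longrightarrow> Re (ip x x) > 0"
proof -
  assume "x \<noteq> 0"
  then have "ip x x \<noteq> 0" using ip_def0[of x] by blast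
  then have "Re (ip x x) \<noteq> 0" using ip_self_real[of x] by (metis of_real_0)
  then show ?thesis using ip_self_re[of x] by linarith
qed
lemma re_scale_left: "Re (ip (sc (complex_of_real t) x) y) = t * Re (ip x y)"
  by (simp add: ip_scale_left)
lemma re_scale_right: "Re (ip y (sc (complex_of_real t) x)) = t * Re (ip y x)"
  by (simp add: ip_scale_right)

lemma norm_sq: "ip_norm ip x ^ 2 = Re (ip x x)"
  unfolding ip_norm_def using ip_self_re[of x] by simp
lemma norm_nonneg: "ip_norm ip x \<ge> 0"
  unfolding ip_norm_def using ip_self_re[of x] by simp
lemma norm_pos: "x \<noteq> 0 \<Longrightarrow> ip_norm ip x > 0"
  unfolding ip_norm_def using ip_self_pos[of x] by simp

lemma re_expand:
  "Re (ip (sc (complex_of_real a) x + sc (complex_of_real b) y) (sc (complex_of_real a) x + sc (complex_of_real b) y))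
   = a^2 * Re (ip x x) + 2*a*b * Re (ip x y) + b^2 * Re (ip y y)"
proof -
  let ?u = "sc (complex_of_real a) x" and ?v = "sc (complex_of_real b) y"
  have "ip (?u + ?v) (?u + ?v) = ip ?u ?u + ip ?u ?v + (ip ?v ?u + ip ?v ?v)"
    by (simp add: ip_add_left ip_add_right add_ac)
  then have "Re (ip (?u + ?v) (?u + ?v)) = Re (ip ?u ?u) + Re (ip ?u ?v) + (Re (ip ?v ?u) + Re (ip ?v ?v))"
    by simp
  also have "\<dots> = a * (a * Re (ip x x)) + a * (b * Re (ip x y)) + (b * (a * Re (ip y x)) + b * (b * Re (ip y y)))"
    by (simp add: re_scale_left re_scale_right algebra_simps)
  also have "\<dots> = a^2 * Re (ip x x) + 2*a*b * Re (ip x y) + b^2 * Re (ip y y)"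
    unfolding re_sym[of y x] by (simp add: power2_eq_square algebra_simps)
  finally show ?thesis .
qed

lemma cs_sq: "Re (ip x y) ^ 2 \<le> Re (ip x x) * Re (ip y y)"
proof (cases "x = 0")
  case True then show ?thesis by simp
next
  case False
  have p: "Re (ip x x) > 0" using ip_self_pos False by simp
  have "0 \<le> Re (ip (sc (complex_of_real (- Re (ip x y))) x + sc (complex_of_real (Re (ip x x))) y)
            (sc (complex_of_real (- Re (ip x y))) x + sc (complex_of_real (Re (ip x x))) y))"
    by (rule ip_self_re)
  also have "\<dots> = Re (ip x x) * (Re (ip x x) * Re (ip y y) - Re (ip x y) ^ 2)"
    by (simp only: re_expand) (simp add: power2_eq_square algebra_simps)
  finally show ?thesis using p by (simp add: zero_le_mult_iff)
qed

lemma cs: "\<bar>Re (ip x y)\<bar> \<le> ip_norm ip x * ip_norm ip y"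
proof -
  have "\<bar>Re (ip x y)\<bar> = sqrt (Re (ip x y) ^ 2)" by simp
  also have "\<dots> \<le> sqrt (Re (ip x x) * Re (ip y y))" by (rule real_sqrt_le_mono[OF cs_sq])
  also have "\<dots> = ip_norm ip x * ip_norm ip y" unfolding ip_norm_def by (simp add: real_sqrt_mult)
  finally show ?thesis .
qed

lemma cos_angle: "x \<noteq> 0 \<Longrightarrow> y \<noteq> 0 \<Longrightarrow> cos (ip_angle ip x y) = Re (ip x y) / (ip_norm ip x * ip_norm ip y)"
proof -
  assume "x \<noteq> 0" "y \<noteq> 0"
  then have pos: "ip_norm ip x * ip_norm ip y > 0" using norm_pos by simp
  have "\<bar>Re (ip x y) / (ip_norm ip x * ip_norm ip y)\<bar> = \<bar>Re (ip x y)\<bar> / (ip_norm ip x * ip_norm ip y)"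
    using pos by (simp add: abs_divide)
  also have "\<dots> \<le> 1" using cs[of x y] pos by (simp add: divide_le_eq)
  finally have "\<bar>Re (ip x y) / (ip_norm ip x * ip_norm ip y)\<bar> \<le> 1" .
  then show ?thesis unfolding ip_angle_def by (rule cos_arccos_abs)
qed

lemma im_via_re: "Im (ip x y) = Re (ip x (sc \<i> y))"
  by (simp add: ip_scale_right)

end



context
  fixes sc :: "complex \<Rightarrow> 'v::ab_group_add \<Rightarrow> 'v" and ip1 ip2 :: "'v \<Rightarrow> 'v \<Rightarrow> complex"
  assumes I1: "is_inner_product sc ip1" and I2: "is_inner_product sc ip2"
begin

lemma const_lemma:
  assumes H: "\<And>x y. x \<noteq> 0 \<Longrightarrow> Re (ip2 y x) * Re (ip1 x x) = Re (ip1 y x) * Re (ip2 x x)"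
  shows "\<exists>c>0. \<forall>x y. Re (ip2 x y) = c * Re (ip1 x y)"
proof -
  define g where "g x = Re (ip2 x x) / Re (ip1 x x)" for x
  have G: "Re (ip2 y x) = g x * Re (ip1 y x)" if "x \<noteq> 0" for x y
    using H[OF that, of y] ip_self_pos[OF I1 that] unfolding g_def by (simp add: field_simps)
  have gpos: "g x > 0" if "x \<noteq> 0" for x
    using ip_self_pos[OF I1 that] ip_self_pos[OF I2 that] unfolding g_def by simp
  have C1: "g x = g z" if "x \<noteq> 0" "z \<noteq> 0" "Re (ip1 z x) \<noteq> 0" for x z
  proof -
    have "Re (ip2 z x) = g x * Re (ip1 z x)" using G that by simp
    moreover have "Re (ip2 x z) = g z * Re (ip1 x z)" using G that by simp
    ultimately have "(g x - g z) * Re (ip1 z x) = 0"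
      using re_sym[OF I1, of x z] re_sym[OF I2, of x z] by (simp add: algebra_simps)
    then show ?thesis using that by simp
  qed
  have C: "g x = g z" if "x \<noteq> 0" "z \<noteq> 0" for x z
  proof (cases "Re (ip1 z x) = 0")
    case False then show ?thesis using C1 that by blast
  next
    case True
    have nz: "x + z \<noteq> 0"
    proof
      assume "x + z = 0"
      then have "z = - x" by (simp add: eq_neg_iff_add_eq_0 add.commute)
      then have "Re (ip1 z x) = - Re (ip1 x x)" by (simp add: ip_minus_left[OF I1])
      then show False using True ip_self_pos[OF I1 that(1)] by simp
    qed
    have "Re (ip1 x (x + z)) = Re (ip1 x x)"
      using True re_sym[OF I1, of x z] by (simp add: ip_add_right[OF I1])
    then have a: "g (x + z) = g x" using C1[OF nz that(1)] ip_self_pos[OF I1 that(1)] by simp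
    have "Re (ip1 z (x + z)) = Re (ip1 z z)"
      using True by (simp add: ip_add_right[OF I1])
    then have b: "g (x + z) = g z" using C1[OF nz that(2)] ip_self_pos[OF I1 that(2)] by simp
    show ?thesis using a b by simp
  qed
  show ?thesis
  proof (cases "\<exists>x0::'v. x0 \<noteq> 0")
    case False
    show ?thesis
    proof (intro exI[of _ 1] conjI allI)
      fix x y :: 'v
      have "x = 0" using False by blast
      then show "Re (ip2 x y) = 1 * Re (ip1 x y)" by (simp add: ip_zero_left[OF I1] ip_zero_left[OF I2])
    qed simp
  next
    case True
    then obtain x0 :: 'v where x0: "x0 \<noteq> 0" by blast
    show ?thesis
    proof (intro exI[of _ "g x0"] conjI allI)
      show "g x0 > 0" using gpos x0 by simp
      fix x y :: 'v
      show "Re (ip2 x y) = g x0 * Re (ip1 x y)"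
      proof (cases "y = 0")
        case True then show ?thesis by (simp add: ip_zero_right[OF I1] ip_zero_right[OF I2])
      next
        case False
        then show ?thesis using G[OF False, of x] C[OF x0 False] by simp
      qed
    qed
  qed
qed

lemma re_to_c:
  assumes "\<forall>x y. Re (ip2 x y) = c * Re (ip1 x y)"
  shows "\<forall>x y. ip2 x y = complex_of_real c * ip1 x y"
proof (intro allI)
  fix x y
  show "ip2 x y = complex_of_real c * ip1 x y"
    using assms im_via_re[OF I1, of x y] im_via_re[OF I2, of x y]
    by (simp add: complex_eq_iff)
qed

lemma orth_H:
  assumes O: "\<forall>x y. Re (ip1 x y) = 0 \<longrightarrow> Re (ip2 x y) = 0"
  shows "\<And>x y. x \<noteq> 0 \<Longrightarrow> Re (ip2 y x) * Re (ip1 x x) = Re (ip1 y x) * Re (ip2 x x)"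
proof -
  fix x y :: 'v assume x: "x \<noteq> 0"
  define t where "t = Re (ip1 y x) / Re (ip1 x x)"
  define w where "w = y - sc (complex_of_real t) x"
  have p: "Re (ip1 x x) > 0" using ip_self_pos[OF I1 x] .
  have "Re (ip1 w x) = 0"
    unfolding w_def t_def using p by (simp add: ip_diff_left[OF I1] ip_scale_left[OF I1])
  then have "Re (ip2 w x) = 0" using O by blast
  then have "Re (ip2 y x) = t * Re (ip2 x x)"
    unfolding w_def by (simp add: ip_diff_left[OF I2] ip_scale_left[OF I2])
  then show "Re (ip2 y x) * Re (ip1 x x) = Re (ip1 y x) * Re (ip2 x x)"
    unfolding t_def using p by (simp add: field_simps)
qed

lemma c_orth_H:
  assumes O: "\<forall>x y. ip1 x y = 0 \<longleftrightarrow> ip2 x y = 0"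
  shows "\<And>x y. x \<noteq> 0 \<Longrightarrow> Re (ip2 y x) * Re (ip1 x x) = Re (ip1 y x) * Re (ip2 x x)"
proof -
  fix x y :: 'v assume x: "x \<noteq> 0"
  define a where "a = ip1 y x / ip1 x x"
  define w where "w = y - sc a x"
  have p: "ip1 x x \<noteq> 0" using ip_self_pos[OF I1 x] by auto
  have "ip1 w x = 0"
    unfolding w_def a_def using p by (simp add: ip_diff_left[OF I1] ip_scale_left[OF I1])
  then have "ip2 w x = 0" using O by blast
  then have "ip2 y x = a * ip2 x x"
    unfolding w_def by (simp add: ip_diff_left[OF I2] ip_scale_left[OF I2])
  then have e: "ip2 y x * ip1 x x = ip1 y x * ip2 x x"
    unfolding a_def using p by (simp add: field_simps)
  have "Re (ip2 y x * ip1 x x) = Re (ip2 y x) * Re (ip1 x x)"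
    by (subst ip_self_real[OF I1]) simp
  moreover have "Re (ip1 y x * ip2 x x) = Re (ip1 y x) * Re (ip2 x x)"
    by (subst ip_self_real[OF I2]) simp
  ultimately show "Re (ip2 y x) * Re (ip1 x x) = Re (ip1 y x) * Re (ip2 x x)"
    using e by metis
qed

end



context
  fixes sc :: "complex \<Rightarrow> 'v::ab_group_add \<Rightarrow> 'v" and ip1 ip2 :: "'v \<Rightarrow> 'v \<Rightarrow> complex"
  assumes I1: "is_inner_product sc ip1" and I2: "is_inner_product sc ip2"
begin

lemma angle_orth:
  assumes t0: "0 < \<theta>0" "\<theta>0 < pi"
    and A: "\<forall>x y. x \<noteq> 0 \<longrightarrow> y \<noteq> 0 \<longrightarrow> (ip_angle ip1 x y = \<theta>0 \<longleftrightarrow> ip_angle ip2 x y = \<theta>0)"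
  shows "\<forall>x y. Re (ip1 x y) = 0 \<longrightarrow> Re (ip2 x y) = 0"
proof (intro allI impI)
  fix x y :: 'v assume o: "Re (ip1 x y) = 0"
  show "Re (ip2 x y) = 0"
  proof (cases "x = 0 \<or> y = 0")
    case True then show ?thesis using ip_zero_left[OF I2] ip_zero_right[OF I2] by auto
  next
    case False
    then have x: "x \<noteq> 0" and y: "y \<noteq> 0" by auto
    define \<alpha> where "\<alpha> = cos \<theta>0"
    define s where "s = sin \<theta>0"
    have s: "s > 0" unfolding s_def using t0 sin_gt_zero by blast
    have as: "\<alpha>^2 + s^2 = 1" unfolding \<alpha>_def s_def by simp
    define p where "p = ip_norm ip1 x"
    define q where "q = ip_norm ip1 y"
    have p: "p > 0" unfolding p_def using norm_pos[OF I1 x] .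
    have q: "q > 0" unfolding q_def using norm_pos[OF I1 y] .
    have p2: "p^2 = Re (ip1 x x)" unfolding p_def using norm_sq[OF I1] .
    have q2: "q^2 = Re (ip1 y y)" unfolding q_def using norm_sq[OF I1] .
    define a where "a = Re (ip2 x x)"
    define b where "b = Re (ip2 x y)"
    define d where "d = Re (ip2 y y)"
    have a: "a > 0" unfolding a_def using ip_self_pos[OF I2 x] .
    have E: "(\<alpha>*q*a + e*p*b)^2 = \<alpha>^2 * a * (\<alpha>^2*q^2*a + 2*\<alpha>*q*e*p*b + e^2*p^2*d)"
      if e: "e^2 = s^2" for e
    proof -
      define z where "z = sc (complex_of_real (\<alpha>*q)) x + sc (complex_of_real (e*p)) y"
      have "Re (ip1 z z) = (\<alpha>*q)^2 * Re (ip1 x x) + 2*(\<alpha>*q)*(e*p)*Re (ip1 x y) + (e*p)^2*Re (ip1 y y)"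
        unfolding z_def by (rule re_expand[OF I1])
      also have "\<dots> = (\<alpha>*q)^2 * p^2 + 2*(\<alpha>*q)*(e*p)*0 + (e*p)^2*q^2"
        by (simp only: o p2 q2)
      also have "\<dots> = (p*q)^2*(\<alpha>^2+e^2)" by (simp add: power_mult_distrib algebra_simps)
      finally have zz1: "Re (ip1 z z) = (p*q)^2" using e as by simp
      have "Re (ip1 x z) = (\<alpha>*q) * Re (ip1 x x) + (e*p) * Re (ip1 x y)"
        unfolding z_def by (simp add: ip_add_right[OF I1] re_scale_right[OF I1] del: of_real_mult)
      then have xz1: "Re (ip1 x z) = \<alpha>*q*p^2" using o p2 by simp
      have z: "z \<noteq> 0"
      proof
        assume "z = 0" then have "Re (ip1 z z) = 0" by (simp add: ip_zero_left[OF I1])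
        then show False using zz1 p q by simp
      qed
      have nz1: "ip_norm ip1 z = p*q"
        unfolding ip_norm_def zz1 using p q by simp
      have "ip_angle ip1 x z = arccos \<alpha>"
        unfolding ip_angle_def xz1 nz1 using p q
        by (simp add: p_def[symmetric] power2_eq_square)
      also have "\<dots> = \<theta>0" unfolding \<alpha>_def using t0 arccos_cos by simp
      finally have "ip_angle ip2 x z = \<theta>0" using A x z by blast
      then have "Re (ip2 x z) / (ip_norm ip2 x * ip_norm ip2 z) = \<alpha>"
        using cos_angle[OF I2 x z] \<alpha>_def by simp
      moreover have "ip_norm ip2 x * ip_norm ip2 z > 0" using norm_pos[OF I2] x z by simp
      ultimately have "Re (ip2 x z) = \<alpha> * (ip_norm ip2 x * ip_norm ip2 z)" by (auto simp: divide_eq_eq split: if_splits)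
      then have "(Re (ip2 x z))^2 = \<alpha>^2 * (ip_norm ip2 x)^2 * (ip_norm ip2 z)^2"
        by (simp add: power_mult_distrib)
      then have sq: "(Re (ip2 x z))^2 = \<alpha>^2 * a * Re (ip2 z z)"
        unfolding a_def norm_sq[OF I2] .
      have h1: "Re (ip2 x z) = \<alpha>*q*a + e*p*b"
        unfolding z_def a_def b_def by (simp add: ip_add_right[OF I2] re_scale_right[OF I2] del: of_real_mult)
      have "Re (ip2 z z) = (\<alpha>*q)^2 * Re (ip2 x x) + 2*(\<alpha>*q)*(e*p)*Re (ip2 x y) + (e*p)^2*Re (ip2 y y)"
        unfolding z_def by (rule re_expand[OF I2])
      also have "\<dots> = \<alpha>^2*q^2*a + 2*\<alpha>*q*e*p*b + e^2*p^2*d"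
        unfolding a_def b_def d_def by algebra
      finally have h2: "Re (ip2 z z) = \<alpha>^2*q^2*a + 2*\<alpha>*q*e*p*b + e^2*p^2*d" .
      show ?thesis using sq unfolding h1 h2 .
    qed
    note E1 = E[of s, OF refl]
    have E2: "(\<alpha>*q*a + (-s)*p*b)^2 = \<alpha>^2 * a * (\<alpha>^2*q^2*a + 2*\<alpha>*q*(-s)*p*b + (-s)^2*p^2*d)"
      by (rule E) simp
    have D1: "(\<alpha>*q*a + s*p*b)^2 - (\<alpha>*q*a + (-s)*p*b)^2 = 4*\<alpha>*q*a*s*p*b" by algebra
    have D2: "\<alpha>^2 * a * (\<alpha>^2*q^2*a + 2*\<alpha>*q*s*p*b + s^2*p^2*d) - \<alpha>^2 * a * (\<alpha>^2*q^2*a + 2*\<alpha>*q*(-s)*p*b + (-s)^2*p^2*d)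
       = 4*\<alpha>^3*a*q*s*p*b" by algebra
    have "4*\<alpha>*q*a*s*p*b = 4*\<alpha>^3*a*q*s*p*b" using D1 D2 E1 E2 by linarith
    then have F: "(4*q*a*s*p*(1-\<alpha>^2)) * (\<alpha> * b) = 0" by algebra
    have "1 - \<alpha>^2 = s^2" using as by simp
    then have "1 - \<alpha>^2 > 0" using s by simp
    then have "4*q*a*s*p*(1-\<alpha>^2) \<noteq> 0" using q a s p by simp
    then have "\<alpha> * b = 0" using F by simp
    then have "\<alpha> = 0 \<or> b = 0" by simp
    then show ?thesis
    proof
      assume "\<alpha> = 0"
      then have "(s*p*b)^2 = 0" using E1 by simp
      then show ?thesis using s p unfolding b_def by simp
    qed (simp add: b_def)
  qed
qed

end



lemma polar:
  assumes I: "is_inner_product sc ip"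
  shows "Re (ip (x + y) (x + y)) = Re (ip x x) + 2 * Re (ip x y) + Re (ip y y)"
proof -
  have "ip (x + y) (x + y) = ip x x + ip x y + (ip y x + ip y y)"
    by (simp add: ip_add_left[OF I] ip_add_right[OF I])
  then have "Re (ip (x + y) (x + y)) = Re (ip x x) + Re (ip x y) + (Re (ip y x) + Re (ip y y))" by simp
  then show ?thesis using re_sym[OF I, of x y] by simp
qed

theorem mainTheorem10:
  fixes sc :: "complex \<Rightarrow> 'v::ab_group_add \<Rightarrow> 'v"
    and ip1 ip2 :: "'v \<Rightarrow> 'v \<Rightarrow> complex"
  assumes "vector_space sc"
    and "is_inner_product sc ip1"
    and "is_inner_product sc ip2"
  defines "P1 \<equiv> (\<exists>c::real. c > 0 \<and> (\<forall>x y. ip2 x y = complex_of_real c * ip1 x y))"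
    and "P2 \<equiv> (\<exists>c::real. c > 0 \<and> (\<forall>x. ip_norm ip2 x = c * ip_norm ip1 x))"
    and "P3 \<equiv> (\<forall>x y. x \<noteq> 0 \<longrightarrow> y \<noteq> 0 \<longrightarrow> ip_angle ip1 x y = ip_angle ip2 x y)"
    and "P4 \<equiv> (\<forall>x y. x \<noteq> 0 \<longrightarrow> y \<noteq> 0 \<longrightarrow>
               (ip_angle ip1 x y = pi / 2 \<longleftrightarrow> ip_angle ip2 x y = pi / 2))"
    and "P5 \<equiv> (\<forall>x y. ip1 x y = 0 \<longleftrightarrow> ip2 x y = 0)"
    and "P6 \<equiv> (\<exists>\<theta>0. 0 < \<theta>0 \<and> \<theta>0 < pi \<and>
               (\<forall>x y. x \<noteq> 0 \<longrightarrow> y \<noteq> 0 \<longrightarrow>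
                  (ip_angle ip1 x y = \<theta>0 \<longleftrightarrow> ip_angle ip2 x y = \<theta>0)))"
  shows "(P1 \<longleftrightarrow> P2) \<and> (P1 \<longleftrightarrow> P3) \<and> (P1 \<longleftrightarrow> P4) \<and> (P1 \<longleftrightarrow> P5) \<and> (P1 \<longleftrightarrow> P6)"
proof -
  note I1 = assms(2) and I2 = assms(3)
  have fromRe: "P1" if "\<exists>c>0. \<forall>x y. Re (ip2 x y) = c * Re (ip1 x y)"
  proof -
    from that obtain c where c: "c > 0" "\<forall>x y. Re (ip2 x y) = c * Re (ip1 x y)" by blast
    show ?thesis unfolding P1_def using c(1) re_to_c[OF I1 I2 c(2)] by blast
  qed
  have p12: "P2" if "P1"
  proof -
    from that obtain c where c: "c > 0" "\<forall>x y. ip2 x y = complex_of_real c * ip1 x y"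
      unfolding P1_def by blast
    have "ip_norm ip2 x = sqrt c * ip_norm ip1 x" for x
      unfolding ip_norm_def using c by (simp add: real_sqrt_mult)
    then show ?thesis unfolding P2_def using c(1) by (intro exI[of _ "sqrt c"]) simp
  qed
  have p21: "P1" if "P2"
  proof -
    from that obtain c where c: "c > 0" "\<forall>x. ip_norm ip2 x = c * ip_norm ip1 x"
      unfolding P2_def by blast
    have sq: "Re (ip2 x x) = c^2 * Re (ip1 x x)" for x
      using c(2) norm_sq[OF I1, of x] norm_sq[OF I2, of x] by (simp add: power_mult_distrib)
    have "Re (ip2 x y) = c^2 * Re (ip1 x y)" for x y
      using polar[OF I1, of x y] polar[OF I2, of x y] sq[of x] sq[of y] sq[of "x + y"]
      by (simp add: algebra_simps)
    then show ?thesis using c(1) by (intro fromRe exI[of _ "c^2"]) simp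
  qed
  have p13: "P3" if "P1"
  proof -
    from that obtain c where c: "c > 0" "\<forall>x y. ip2 x y = complex_of_real c * ip1 x y"
      unfolding P1_def by blast
    have n: "ip_norm ip2 x = sqrt c * ip_norm ip1 x" for x
      unfolding ip_norm_def using c by (simp add: real_sqrt_mult)
    have "ip_angle ip2 x y = ip_angle ip1 x y" for x y
    proof -
      have "Re (ip2 x y) / (ip_norm ip2 x * ip_norm ip2 y)
          = (c * Re (ip1 x y)) / ((sqrt c * sqrt c) * (ip_norm ip1 x * ip_norm ip1 y))"
        using c(2) n by (simp add: algebra_simps)
      also have "\<dots> = Re (ip1 x y) / (ip_norm ip1 x * ip_norm ip1 y)"
        using c(1) by simp
      finally show ?thesis unfolding ip_angle_def by simp
    qed
    then show ?thesis unfolding P3_def by simp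
  qed
  have p34: "P4" if "P3" using that unfolding P3_def P4_def by simp
  have p46: "P6" if "P4"
    unfolding P6_def using that unfolding P4_def by (intro exI[of _ "pi/2"]) simp
  have p61: "P1" if "P6"
  proof -
    from that obtain \<theta>0 where t: "0 < \<theta>0" "\<theta>0 < pi"
      "\<forall>x y. x \<noteq> 0 \<longrightarrow> y \<noteq> 0 \<longrightarrow> (ip_angle ip1 x y = \<theta>0 \<longleftrightarrow> ip_angle ip2 x y = \<theta>0)"
      unfolding P6_def by blast
    have O: "\<forall>x y. Re (ip1 x y) = 0 \<longrightarrow> Re (ip2 x y) = 0"
      by (rule angle_orth[OF I1 I2 t])
    show ?thesis by (rule fromRe, rule const_lemma[OF I1 I2 orth_H[OF I1 I2 O]])
  qed
  have p15: "P5" if "P1"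
  proof -
    from that obtain c where c: "c > 0" "\<forall>x y. ip2 x y = complex_of_real c * ip1 x y"
      unfolding P1_def by blast
    then show ?thesis unfolding P5_def by simp
  qed
  have p51: "P1" if "P5"
    using that unfolding P5_def
    by (intro fromRe const_lemma[OF I1 I2] c_orth_H[OF I1 I2]) blast+
  show ?thesis using p12 p21 p13 p34 p46 p61 p15 p51 by blast
qed



end
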